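(* Let $r\ge 1$, let $q_1,\ldots,q_r$ be positive even integers with $\max_i q_i>2$, and let $G=\Theta_{1,q_1,\ldots,q_r}$. If $p\ge\max\{3,\Delta(G)\}$, then $G$ is strongly $p$-edge-orientable.
   Context: For positive integers $p_1,\ldots,p_k$, the $\Theta$-graph $\Theta_{p_1,\ldots,p_k}$ is the graph obtained from two vertices $x_1,x_2$ joined by $k$ internally disjoint paths, the $i$th path having $p_i$ edges. A path with $1$ edge is the edge $x_1x_2$. An orientation of a graph $H$ is any digraph obtained by replacing each edge $uv$ with the arc $(u,v)$, with the arc $(v,u)$, or with both arcs. A kernel of a digraph $D$ is an independent set $S$ such that every vertex of $D-S$ has an out-neighbor in $S$. $D$ is kernel-perfect if every induced subdigraph of $D$ has a kernel. For $f:V(H)\to\mathbb{N}$, an orientation $D$ of $H$ is $f$-kernel-perfect if it is kernel-perfect and $f(v)\ge 1+d^+_D(v)$ for all $v$. For $f:E(G)\to\mathbb{N}$, $G$ is $f$-edge-orientable if its line graph $L(G)$ admits an $f$-kernel-perfect orientation. For $v\in V(G)$, define $f_{k,v}:E(G)\to\mathbb{N}$ by $f_{k,v}(e)=d_G(v)$ if $e$ is incident to $v$, and $f_{k,v}(e)=k$ otherwise. $G$ is strongly $k$-edge-orientable if $G$ is $f_{k,v}$-edge-orientable for every $v\in V(G)$. *)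

theory Defs
  imports Main
begin

text \<open>Simple graphs are given by a vertex set V and an edge set E of 2-element subsets of V.
  Digraphs are given by a vertex set W and an arc set A \<subseteq> W \<times> W.\<close>

definition degree :: "'a set set \<Rightarrow> 'a \<Rightarrow> nat" where
  "degree E v = card {e \<in> E. v \<in> e}"

definition max_degree :: "'a set \<Rightarrow> 'a set set \<Rightarrow> nat" where
  "max_degree V E = Max (degree E ` V)"

definition line_graph_edges :: "'a set set \<Rightarrow> 'a set set set" where
  "line_graph_edges E = {{e, e'} | e e'. e \<in> E \<and> e' \<in> E \<and> e \<noteq> e' \<and> e \<inter> e' \<noteq> {}}"

definition is_orientation :: "'b set \<Rightarrow> 'b set set \<Rightarrow> ('b \<times> 'b) set \<Rightarrow> bool" where
  "is_orientation VH EH A \<longleftrightarrow>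
     (\<forall>(u, v) \<in> A. u \<in> VH \<and> v \<in> VH \<and> {u, v} \<in> EH) \<and>
     (\<forall>u v. {u, v} \<in> EH \<and> u \<noteq> v \<longrightarrow> (u, v) \<in> A \<or> (v, u) \<in> A)"

definition out_degree :: "('b \<times> 'b) set \<Rightarrow> 'b \<Rightarrow> nat" where
  "out_degree A v = card {u. (v, u) \<in> A}"

definition is_kernel :: "'b set \<Rightarrow> ('b \<times> 'b) set \<Rightarrow> 'b set \<Rightarrow> bool" where
  "is_kernel W A S \<longleftrightarrow> S \<subseteq> W \<and> (\<forall>u \<in> S. \<forall>v \<in> S. (u, v) \<notin> A) \<and>
     (\<forall>v \<in> W - S. \<exists>u \<in> S. (v, u) \<in> A)"

definition kernel_perfect :: "'b set \<Rightarrow> ('b \<times> 'b) set \<Rightarrow> bool" where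
  "kernel_perfect V A \<longleftrightarrow> (\<forall>W \<subseteq> V. \<exists>S. is_kernel W A S)"

definition f_kernel_perfect :: "'b set \<Rightarrow> ('b \<times> 'b) set \<Rightarrow> ('b \<Rightarrow> nat) \<Rightarrow> bool" where
  "f_kernel_perfect V A f \<longleftrightarrow> kernel_perfect V A \<and> (\<forall>v \<in> V. f v \<ge> 1 + out_degree A v)"

definition f_edge_orientable :: "'a set set \<Rightarrow> ('a set \<Rightarrow> nat) \<Rightarrow> bool" where
  "f_edge_orientable E f \<longleftrightarrow>
     (\<exists>A. is_orientation E (line_graph_edges E) A \<and> f_kernel_perfect E A f)"

definition f_kv :: "'a set set \<Rightarrow> nat \<Rightarrow> 'a \<Rightarrow> 'a set \<Rightarrow> nat" where
  "f_kv E k v e = (if v \<in> e then degree E v else k)"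

definition strongly_edge_orientable :: "'a set \<Rightarrow> 'a set set \<Rightarrow> nat \<Rightarrow> bool" where
  "strongly_edge_orientable V E k \<longleftrightarrow> (\<forall>v \<in> V. f_edge_orientable E (f_kv E k v))"

text \<open>Theta graph Theta_{1,q_1,...,q_r} with qs = [q_1,...,q_r]:
  x1 = (0,0), x2 = (0,1); internal vertices of the i-th path (0-based i) are (Suc i, j), 0<j<q_i.\<close>
definition theta_pv :: "nat list \<Rightarrow> nat \<Rightarrow> nat \<Rightarrow> nat \<times> nat" where
  "theta_pv qs i j = (if j = 0 then (0, 0) else if j = qs ! i then (0, 1) else (Suc i, j))"

definition theta_V :: "nat list \<Rightarrow> (nat \<times> nat) set" where
  "theta_V qs = {(0, 0), (0, 1)} \<union> {(Suc i, j) | i j. i < length qs \<and> 0 < j \<and> j < qs ! i}"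

definition theta_E :: "nat list \<Rightarrow> (nat \<times> nat) set set" where
  "theta_E qs = {{(0, 0), (0, 1)}} \<union>
     {{theta_pv qs i j, theta_pv qs i (Suc j)} | i j. i < length qs \<and> j < qs ! i}"

end

theory Submission
  imports Defs "HOL-Library.Product_Lexorder"
begin

lemma K_layer:
  fixes g :: "'a \<Rightarrow> 'k::linorder"
  assumes "finite W"
    and "\<forall>u\<in>W. \<forall>w\<in>W. (u,w) \<in> A \<longrightarrow> g w \<le> g u"
    and "\<forall>U \<subseteq> W. U \<noteq> {} \<longrightarrow> (\<forall>u\<in>U. \<forall>u'\<in>U. g u = g u') \<longrightarrow> (\<exists>S. is_kernel U A S)"
  shows "\<exists>S. is_kernel W A S"
  using assms
proof (induction "card W" arbitrary: W rule: less_induct)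
  case less
  show ?case
  proof (cases "W = {}")
    case True then show ?thesis by (auto simp: is_kernel_def)
  next
    case False
    define m where "m = Min (g ` W)"
    define L where "L = {u\<in>W. g u = m}"
    have "m \<in> g ` W" unfolding m_def using False less.prems(1) by (intro Min_in) auto
    then have Lne: "L \<noteq> {}" unfolding L_def by auto
    have mmin: "\<forall>u\<in>W. m \<le> g u" unfolding m_def using less.prems(1) by auto
    have "L \<subseteq> W" unfolding L_def by auto
    moreover have Lc: "\<forall>u\<in>L. \<forall>u'\<in>L. g u = g u'" unfolding L_def by auto
    ultimately obtain K where K: "is_kernel L A K" using less.prems(3)[rule_format, of L] Lne by blast
    define W' where "W' = {u \<in> W - L. \<forall>k\<in>K. (u,k) \<notin> A}"
    have W'sub: "W' \<subseteq> W" unfolding W'_def by auto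
    have "W' \<subset> W" using Lne \<open>L \<subseteq> W\<close> unfolding W'_def by auto
    then have c1: "card W' < card W" using less.prems(1) by (simp add: psubset_card_mono)
    have c2: "finite W'" using W'sub less.prems(1) finite_subset by blast
    have hyp2: "\<forall>u\<in>W'. \<forall>w\<in>W'. (u,w) \<in> A \<longrightarrow> g w \<le> g u"
      using less.prems(2) W'sub by (meson subsetD)
    have hyp3: "\<forall>U \<subseteq> W'. U \<noteq> {} \<longrightarrow> (\<forall>u\<in>U. \<forall>u'\<in>U. g u = g u') \<longrightarrow> (\<exists>S. is_kernel U A S)"
    proof (intro allI impI)
      fix U assume a: "U \<subseteq> W'" "U \<noteq> {}" "\<forall>u\<in>U. \<forall>u'\<in>U. g u = g u'"
      have "U \<subseteq> W" using a(1) W'sub by (rule subset_trans)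
      then show "\<exists>S. is_kernel U A S" using less.prems(3)[rule_format, of U] a(2,3) by blast
    qed
    obtain K' where K': "is_kernel W' A K'"
      using less.hyps[OF c1 c2 hyp2 hyp3] by blast
    have KL: "K \<subseteq> L" using K by (simp add: is_kernel_def)
    have K'W: "K' \<subseteq> W'" using K' by (simp add: is_kernel_def)
    have "is_kernel W A (K \<union> K')"
      unfolding is_kernel_def
    proof (intro conjI ballI)
      show "K \<union> K' \<subseteq> W" using KL K'W \<open>L \<subseteq> W\<close> W'sub by auto
    next
      fix u v assume u: "u \<in> K \<union> K'" and v: "v \<in> K \<union> K'"
      show "(u, v) \<notin> A"
      proof
        assume uv: "(u,v) \<in> A"
        show False
        proof (cases "u \<in> K")
          case True
          show False
          proof (cases "v \<in> K")
            case True then show False using K \<open>u\<in>K\<close> uv by (auto simp: is_kernel_def)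
          next
            case False
            then have "v \<in> W'" using v K'W by auto
            then have "v \<in> W" "v \<notin> L" unfolding W'_def by auto
            moreover have "u \<in> W" "g u = m" using True KL \<open>L \<subseteq> W\<close> unfolding L_def by auto
            moreover have "g v \<le> g u" using less.prems(2) uv \<open>u \<in> W\<close> \<open>v \<in> W\<close> by blast
            moreover have "m \<le> g v" using mmin \<open>v \<in> W\<close> by blast
            ultimately show False unfolding L_def by auto
          qed
        next
          case False
          then have uW': "u \<in> W'" using u K'W by auto
          show False
          proof (cases "v \<in> K")
            case True then show False using uW' uv unfolding W'_def by auto
          next
            case False then show False using K' uW' v uv \<open>u \<notin> K\<close> u by (auto simp: is_kernel_def)
          qed
        qed
      qed
    next
      fix v assume v: "v \<in> W - (K \<union> K')"
      show "\<exists>u\<in>K \<union> K'. (v, u) \<in> A"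
      proof (cases "v \<in> L")
        case True then show ?thesis using K v by (auto simp: is_kernel_def)
      next
        case False
        show ?thesis
        proof (cases "\<exists>k\<in>K. (v,k) \<in> A")
          case True then show ?thesis by auto
        next
          case nk: False
          then have "v \<in> W' - K'" using v False unfolding W'_def by auto
          then show ?thesis using K' by (auto simp: is_kernel_def)
        qed
      qed
    qed
    then show ?thesis by blast
  qed
qed

lemma K_strict:
  fixes g :: "'a \<Rightarrow> 'k::linorder"
  assumes "finite W"
    and "\<forall>u\<in>W. \<forall>w\<in>W. (u,w) \<in> A \<longrightarrow> g w < g u"
  shows "\<exists>S. is_kernel W A S"
proof (rule K_layer[where W=W and g=g and A=A])
  show "finite W" by fact
  show "\<forall>u\<in>W. \<forall>w\<in>W. (u, w) \<in> A \<longrightarrow> g w \<le> g u" using assms(2) by (meson less_imp_le)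
  show "\<forall>U\<subseteq>W. U \<noteq> {} \<longrightarrow> (\<forall>u\<in>U. \<forall>u'\<in>U. g u = g u') \<longrightarrow> (\<exists>S. is_kernel U A S)"
  proof (intro allI impI)
    fix U assume "U \<subseteq> W" "\<forall>u\<in>U. \<forall>u'\<in>U. g u = g u'"
    then have "is_kernel U A U" using assms(2) unfolding is_kernel_def by (metis Diff_cancel empty_iff order_less_irrefl subset_iff)
    then show "\<exists>S. is_kernel U A S" by blast
  qed
qed

lemma cycle_kernel:
  assumes n: "even n" "n \<ge> 2" and inj: "inj_on c {..<n}"
    and arcs: "\<And>i j. i<n \<Longrightarrow> j<n \<Longrightarrow> (c i, c j) \<in> A \<longleftrightarrow> j = Suc i mod n"
    and U: "U \<subseteq> c ` {..<n}"
  shows "\<exists>S. is_kernel U A S"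
proof (cases "U = c ` {..<n}")
  case True
  define S where "S = c ` {i. i<n \<and> even i}"
  have "is_kernel U A S"
    unfolding is_kernel_def
  proof (intro conjI ballI)
    show "S \<subseteq> U" unfolding S_def True by auto
  next
    fix u v assume "u \<in> S" "v \<in> S"
    then obtain i j where ij: "i<n" "even i" "j<n" "even j" "u = c i" "v = c j" unfolding S_def by auto
    show "(u,v) \<notin> A"
    proof
      assume "(u,v) \<in> A"
      then have "j = Suc i mod n" using arcs ij by auto
      moreover have "Suc i < n \<or> Suc i = n" using ij by auto
      ultimately show False using ij n by (auto)
    qed
  next
    fix v assume "v \<in> U - S"
    then obtain i where i: "i<n" "v = c i" "odd i" unfolding True S_def by auto
    define j where "j = Suc i mod n"
    have "j < n" using n unfolding j_def by auto
    have "even j"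
    proof (cases "Suc i < n")
      case True then show ?thesis using i unfolding j_def by auto
    next
      case False then have "Suc i = n" using i by auto
      then show ?thesis unfolding j_def by auto
    qed
    then have "c j \<in> S" using \<open>j<n\<close> unfolding S_def by auto
    moreover have "(v, c j) \<in> A" using arcs i \<open>j<n\<close> unfolding j_def by auto
    ultimately show "\<exists>u\<in>S. (v, u) \<in> A" by blast
  qed
  then show ?thesis by blast
next
  case False
  then obtain m where m: "m < n" "c m \<notin> U" using U by auto
  define ci where "ci = inv_into {..<n} c"
  have ci: "\<And>i. i<n \<Longrightarrow> ci (c i) = i" unfolding ci_def using inj by (simp add: inv_into_f_f)
  define g where "g u = (if ci u \<le> m then m - ci u else m + n - ci u)" for u
  have "finite U" using U finite_surj by blast
  show ?thesis
  proof (rule K_strict[of U A g])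
    show "finite U" by fact
    show "\<forall>u\<in>U. \<forall>w\<in>U. (u, w) \<in> A \<longrightarrow> g w < g u"
    proof (intro ballI impI)
      fix u w assume u: "u \<in> U" and w: "w \<in> U" and uw: "(u,w) \<in> A"
      obtain i where i: "i<n" "u = c i" using u U by auto
      obtain j where j: "j<n" "w = c j" using w U by auto
      have "i \<noteq> m" "j \<noteq> m" using i j m u w by auto
      have jj: "j = Suc i mod n" using arcs i j uw by auto
      have gu: "g u = (if i \<le> m then m - i else m + n - i)" unfolding g_def using ci i by simp
      have gw: "g w = (if j \<le> m then m - j else m + n - j)" unfolding g_def using ci j by simp
      show "g w < g u"
      proof (cases "Suc i < n")
        case True then have "j = Suc i" using jj by auto
        then show ?thesis using gu gw \<open>i \<noteq> m\<close> \<open>j\<noteq>m\<close> i m by auto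
      next
        case False then have "Suc i = n" using i by auto
        then have "j = 0" using jj by auto
        then show ?thesis using gu gw \<open>i \<noteq> m\<close> \<open>Suc i = n\<close> m by auto
      qed
    qed
  qed
qed

lemma kernel_transfer:
  assumes inj: "inj_on h V" and AL: "AL \<subseteq> V \<times> V" and WL: "WL \<subseteq> V" and K: "is_kernel WL AL SL"
  shows "is_kernel (h ` WL) ((\<lambda>(x,y). (h x, h y)) ` AL) (h ` SL)"
proof -
  have mem: "\<And>x y. x \<in> V \<Longrightarrow> y \<in> V \<Longrightarrow> (h x, h y) \<in> (\<lambda>(x,y). (h x, h y)) ` AL \<longleftrightarrow> (x,y) \<in> AL"
  proof -
    fix x y assume "x \<in> V" "y \<in> V"
    show "(h x, h y) \<in> (\<lambda>(x,y). (h x, h y)) ` AL \<longleftrightarrow> (x,y) \<in> AL"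
    proof
      assume "(h x, h y) \<in> (\<lambda>(x,y). (h x, h y)) ` AL"
      then obtain a b where "(a,b) \<in> AL" "h a = h x" "h b = h y" by auto
      moreover then have "a \<in> V" "b \<in> V" using AL by auto
      ultimately show "(x,y) \<in> AL" using inj \<open>x\<in>V\<close> \<open>y\<in>V\<close> by (metis inj_on_eq_iff)
    qed auto
  qed
  have SL: "SL \<subseteq> WL" using K by (simp add: is_kernel_def)
  show ?thesis unfolding is_kernel_def
  proof (intro conjI ballI)
    show "h ` SL \<subseteq> h ` WL" using SL by auto
  next
    fix u v assume "u \<in> h ` SL" "v \<in> h ` SL"
    then obtain x y where "x \<in> SL" "y \<in> SL" "u = h x" "v = h y" by auto
    moreover have "(x,y) \<notin> AL" using K \<open>x \<in> SL\<close> \<open>y \<in> SL\<close> by (auto simp: is_kernel_def)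
    moreover have "x \<in> V" "y \<in> V" using \<open>x \<in> SL\<close> \<open>y \<in> SL\<close> SL WL by auto
    ultimately show "(u, v) \<notin> (\<lambda>(x,y). (h x, h y)) ` AL" using mem[of x y] by simp
  next
    fix v assume "v \<in> h ` WL - h ` SL"
    then obtain x where x: "x \<in> WL" "v = h x" "x \<notin> SL" by auto
    then have "x \<in> WL - SL" by auto
    then obtain y where "y \<in> SL" "(x,y) \<in> AL" using K unfolding is_kernel_def by blast
    then show "\<exists>u\<in>h ` SL. (v, u) \<in> (\<lambda>(x,y). (h x, h y)) ` AL" using x by force
  qed
qed


locale th =
  fixes qs :: "nat list"
  assumes len: "length qs \<ge> 1" and qpos: "\<forall>q\<in>set qs. q > 0 \<and> even q"
begin

abbreviation "r \<equiv> length qs"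
abbreviation "pv \<equiv> theta_pv qs"

lemma q2: "i < r \<Longrightarrow> qs ! i \<ge> 2"
  using qpos nth_mem[of i qs] by (metis One_nat_def Suc_leI dvd_imp_le less_2_cases_iff nat_less_le odd_one)

lemma pv0[simp]: "pv i 0 = (0,0)" by (simp add: theta_pv_def)
lemma pvq[simp]: "i < r \<Longrightarrow> pv i (qs!i) = (0,1)" using q2[of i] by (simp add: theta_pv_def)
lemma pvint: "0 < j \<Longrightarrow> j < qs!i \<Longrightarrow> pv i j = (Suc i, j)" by (simp add: theta_pv_def)

definition lab :: "(nat \<times> nat) set" where
  "lab = insert (0,0) {(Suc i, j) | i j. i < r \<and> j < qs!i}"

definition ed :: "nat \<times> nat \<Rightarrow> (nat \<times> nat) set" where
  "ed l = (if fst l = 0 then {(0,0),(0,1)} else {pv (fst l - 1) (snd l), pv (fst l - 1) (Suc (snd l))})"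

lemma edS[simp]: "ed (0,j) = {(0,0),(0,1)}" by (simp add: ed_def)
lemma edP[simp]: "ed (Suc i, j) = {pv i j, pv i (Suc j)}" by (simp add: ed_def)

lemma labP[simp]: "(Suc i, j) \<in> lab \<longleftrightarrow> i < r \<and> j < qs!i" by (auto simp: lab_def)
lemma labS[simp]: "(0, j) \<in> lab \<longleftrightarrow> j = 0" by (auto simp: lab_def)

lemma lab_cases:
  assumes "l \<in> lab"
  obtains "l = (0,0)" | i j where "l = (Suc i, j)" "i < r" "j < qs!i"
  using assms unfolding lab_def by auto

lemma E_eq: "theta_E qs = ed ` lab"
proof -
  have "{{pv i j, pv i (Suc j)} | i j. i < r \<and> j < qs ! i} = ed ` {(Suc i, j) | i j. i < r \<and> j < qs!i}"
    by force
  then show ?thesis unfolding theta_E_def lab_def by auto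
qed

definition inc :: "nat \<times> nat \<Rightarrow> (nat \<times> nat) set" where
  "inc z = {l \<in> lab. z \<in> ed l}"

lemma inc_int:
  assumes "i < r" "0 < j" "j < qs!i"
  shows "inc (Suc i, j) = {(Suc i, j - 1), (Suc i, j)}"
proof -
  have "l \<in> inc (Suc i, j) \<longleftrightarrow> l = (Suc i, j - 1) \<or> l = (Suc i, j)" for l
  proof (cases l)
    case (Pair a b)
    show ?thesis
    proof (cases a)
      case 0 then show ?thesis using Pair by (auto simp: inc_def)
    next
      case (Suc i')
      show ?thesis using Pair Suc assms q2[of i] q2[of i']
        by (auto simp: inc_def theta_pv_def split: if_splits)
    qed
  qed
  then show ?thesis by blast
qed

lemma inc_x1: "inc (0,0) = insert (0,0) ((\<lambda>i. (Suc i, 0)) ` {..<r})"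
proof -
  have "l \<in> inc (0,0) \<longleftrightarrow> l = (0,0) \<or> (\<exists>i<r. l = (Suc i, 0))" for l
  proof (cases l)
    case (Pair a b)
    show ?thesis
    proof (cases a)
      case 0 then show ?thesis using Pair by (auto simp: inc_def)
    next
      case (Suc i')
      show ?thesis using Pair Suc q2[of i']
        by (auto simp: inc_def theta_pv_def split: if_splits)
    qed
  qed
  then show ?thesis by blast
qed

lemma inc_x2: "inc (0,1) = insert (0,0) ((\<lambda>i. (Suc i, qs!i - 1)) ` {..<r})"
proof -
  have "l \<in> inc (0,1) \<longleftrightarrow> l = (0,0) \<or> (\<exists>i<r. l = (Suc i, qs!i - 1))" for l
  proof (cases l)
    case (Pair a b)
    show ?thesis
    proof (cases a)
      case 0 then show ?thesis using Pair by (auto simp: inc_def)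
    next
      case (Suc i')
      show ?thesis using Pair Suc q2[of i']
        by (auto simp: inc_def theta_pv_def split: if_splits)
    qed
  qed
  then show ?thesis by blast
qed

lemma ed_inj: "inj_on ed lab"
proof (rule inj_onI)
  fix l l' assume l: "l \<in> lab" and l': "l' \<in> lab" and e: "ed l = ed l'"
  show "l = l'"
  proof (cases rule: lab_cases[OF l])
    case 1
    show ?thesis
    proof (cases rule: lab_cases[OF l'])
      case 1 then show ?thesis using \<open>l = (0,0)\<close> by simp
    next
      case (2 i j)
      have "l' \<in> inc (0,0)" "l' \<in> inc (0,1)" using e 1 l' by (auto simp: inc_def)
      then show ?thesis using 2 q2[of i] unfolding inc_x1 inc_x2 by auto
    qed
  next
    case (2 i j)
    define z where "z = (if j = 0 then (Suc i, 1) else (Suc i, j))"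
    have zi: "z \<in> ed l" using 2 q2[of i] unfolding z_def by (auto simp: theta_pv_def)
    have zin: "inc z = (if j = 0 then {(Suc i, 0), (Suc i, 1)} else {(Suc i, j - 1), (Suc i, j)})"
      unfolding z_def using 2 q2[of i] by (auto simp: inc_int)
    have "l' \<in> inc z" using zi e l' by (auto simp: inc_def)
    moreover have "l' \<noteq> (Suc i, j - 1) \<or> j = 0"
    proof (rule ccontr)
      assume "\<not> (l' \<noteq> (Suc i, j - 1) \<or> j = 0)"
      then have "l' = (Suc i, j - 1)" "j > 0" by auto
      then have "pv i (j - 1) \<in> ed l" using e by simp
      then show False using 2 \<open>j>0\<close> by (auto simp: theta_pv_def split: if_splits)
    qed
    moreover have "l' \<noteq> (Suc i, 1) \<or> j \<noteq> 0"
    proof (rule ccontr)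
      assume "\<not> (l' \<noteq> (Suc i, 1) \<or> j \<noteq> 0)"
      then have "l' = (Suc i, 1)" "j = 0" by auto
      then have "pv i (Suc (Suc 0)) \<in> ed l" using e by simp
      then show False using 2 \<open>j=0\<close> q2[of i] by (auto simp: theta_pv_def split: if_splits)
    qed
    ultimately show ?thesis using zin 2 by (auto split: if_splits)
  qed
qed

lemma qmax: "i < r \<Longrightarrow> j < qs!i \<Longrightarrow> j \<le> Max (set qs)"
  using Max_ge[of "set qs" "qs!i"] by (meson finite_set le_trans less_imp_le nth_mem)

lemma finite_lab: "finite lab"
proof -
  have "lab \<subseteq> {..r} \<times> {..Max (set qs)}"
    unfolding lab_def by (auto dest: qmax)
  then show ?thesis using finite_subset by blast
qed

lemma V_eq: "theta_V qs = {(0,0),(0,1)} \<union> {(Suc i, j) | i j. i < r \<and> 0 < j \<and> j < qs!i}"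
  unfolding theta_V_def by simp

lemma finite_V: "finite (theta_V qs)"
proof -
  have "0 < r" using len by linarith
  then have "1 < qs!0" using q2[of 0] by simp
  then have m1: "1 \<le> Max (set qs)" using qmax[of 0 1] \<open>0<r\<close> by simp
  have "theta_V qs \<subseteq> {..r} \<times> {..Max (set qs)}"
    unfolding V_eq using m1 by (auto dest: qmax)
  then show ?thesis using finite_subset by blast
qed

lemma degree_eq: "degree (theta_E qs) z = card (inc z)"
proof -
  have "{e \<in> theta_E qs. z \<in> e} = ed ` inc z" unfolding E_eq inc_def by auto
  moreover have "inj_on ed (inc z)" using ed_inj by (rule inj_on_subset) (auto simp: inc_def)
  ultimately show ?thesis unfolding degree_def by (simp add: card_image)
qed

lemma card_x1: "card (inc (0,0)) = r + 1"
  unfolding inc_x1 by (subst card_insert_disjoint) (auto simp: card_image inj_on_def)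
lemma card_x2: "card (inc (0,1)) = r + 1"
  unfolding inc_x2 by (subst card_insert_disjoint) (auto simp: card_image inj_on_def)

lemma finite_inc: "finite (inc z)" using finite_lab unfolding inc_def by auto

end

context th begin

definition Rr :: "(nat\<times>nat \<Rightarrow> nat\<times>nat\<times>nat) \<Rightarrow> (nat\<times>nat \<Rightarrow> nat\<times>nat \<Rightarrow> bool) \<Rightarrow> nat\<times>nat \<Rightarrow> nat\<times>nat \<Rightarrow> bool" where
  "Rr key cyc l l' \<longleftrightarrow> l \<in> lab \<and> l' \<in> lab \<and> l \<noteq> l' \<and> ed l \<inter> ed l' \<noteq> {} \<and>
     (key l' < key l \<or> (key l' = key l \<and> cyc l l'))"

lemma Rr_le: "Rr key cyc l l' \<Longrightarrow> key l' \<le> key l"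
  unfolding Rr_def by (metis less_imp_le order_refl)

lemma Rr_D: "Rr key cyc l l' \<Longrightarrow> l \<in> lab \<and> l' \<in> lab \<and> l\<noteq>l' \<and> ed l \<inter> ed l' \<noteq> {}"
  unfolding Rr_def by (elim conjE) (intro conjI)

definition "AL key cyc = {(l,l'). Rr key cyc l l'}"
definition "AE key cyc = (\<lambda>(x,y). (ed x, ed y)) ` AL key cyc"
definition "Out key cyc l = {l'. Rr key cyc l l'}"

end

context th begin
lemma orient:
  assumes H: "\<forall>l\<in>lab. \<forall>l'\<in>lab. l \<noteq> l' \<and> ed l \<inter> ed l' \<noteq> {} \<and> key l = key l' \<longrightarrow> cyc l l' \<or> cyc l' l"
  shows "is_orientation (theta_E qs) (line_graph_edges (theta_E qs)) (AE key cyc)"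
  unfolding is_orientation_def
proof (intro conjI allI impI ballI)
  fix x assume "x \<in> AE key cyc"
  then obtain l l' where x: "x = (ed l, ed l')" and R: "Rr key cyc l l'"
    unfolding AE_def AL_def by auto
  have Rl: "l \<in> lab" "l' \<in> lab" "l \<noteq> l'" "ed l \<inter> ed l' \<noteq> {}" using R unfolding Rr_def by auto
  then have ne: "ed l \<noteq> ed l'" using ed_inj by (meson inj_on_eq_iff)
  have "{ed l, ed l'} \<in> line_graph_edges (theta_E qs)"
    unfolding line_graph_edges_def E_eq using Rl ne by blast
  then show "case x of (u, v) \<Rightarrow> u \<in> theta_E qs \<and> v \<in> theta_E qs \<and> {u, v} \<in> line_graph_edges (theta_E qs)"
    using x Rl unfolding E_eq by simp
next
  fix u v assume uv: "{u, v} \<in> line_graph_edges (theta_E qs) \<and> u \<noteq> v"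
  then obtain e e' where "{u,v} = {e,e'}" "e \<in> theta_E qs" "e' \<in> theta_E qs" "e \<noteq> e'" "e \<inter> e' \<noteq> {}"
    unfolding line_graph_edges_def by blast
  then have uvE: "u \<in> theta_E qs" "v \<in> theta_E qs" "u \<inter> v \<noteq> {}"
    by (auto simp: doubleton_eq_iff)
  then obtain l l' where l: "l \<in> lab" "u = ed l" and l': "l' \<in> lab" "v = ed l'" unfolding E_eq by auto
  have "l \<noteq> l'" using uv l l' by auto
  have i1: "ed l \<inter> ed l' \<noteq> {}" using uvE l l' by simp
  then have i2: "ed l' \<inter> ed l \<noteq> {}" by (simp add: Int_commute)
  have "Rr key cyc l l' \<or> Rr key cyc l' l"
  proof (cases "key l = key l'")
    case True
    then have "cyc l l' \<or> cyc l' l" using H l l' \<open>l \<noteq> l'\<close> i1 by blast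
    then show ?thesis using True l l' \<open>l \<noteq> l'\<close> i1 i2 unfolding Rr_def by metis
  next
    case False
    then have "key l < key l' \<or> key l' < key l" by auto
    then show ?thesis using l l' \<open>l \<noteq> l'\<close> i1 i2 unfolding Rr_def by metis
  qed
  then have "(l,l') \<in> AL key cyc \<or> (l',l) \<in> AL key cyc" unfolding AL_def by simp
  then show "(u, v) \<in> AE key cyc \<or> (v, u) \<in> AE key cyc"
  proof
    assume "(l,l') \<in> AL key cyc"
    then have "(ed l, ed l') \<in> AE key cyc" unfolding AE_def by (rule rev_image_eqI) simp
    then show ?thesis using l l' by simp
  next
    assume "(l',l) \<in> AL key cyc"
    then have "(ed l', ed l) \<in> AE key cyc" unfolding AE_def by (rule rev_image_eqI) simp
    then show ?thesis using l l' by simp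
  qed
qed

end

context th begin
lemma kp:
  assumes fib: "\<forall>U \<subseteq> lab. U \<noteq> {} \<longrightarrow> (\<forall>u\<in>U. \<forall>u'\<in>U. key u = key u') \<longrightarrow> (\<exists>S. is_kernel U (AL key cyc) S)"
  shows "kernel_perfect (theta_E qs) (AE key cyc)"
  unfolding kernel_perfect_def
proof (intro allI impI)
  fix W assume W: "W \<subseteq> theta_E qs"
  define WL where "WL = {l \<in> lab. ed l \<in> W}"
  have WW: "W = ed ` WL" using W unfolding WL_def E_eq by auto
  have f1: "finite WL" using finite_lab unfolding WL_def by auto
  have f2: "\<forall>u\<in>WL. \<forall>w\<in>WL. (u,w) \<in> AL key cyc \<longrightarrow> key w \<le> key u"
  proof (intro ballI impI)
    fix u w assume "(u,w) \<in> AL key cyc"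
    then have "Rr key cyc u w" by (simp add: AL_def)
    then show "key w \<le> key u" by (rule Rr_le)
  qed
  have f3: "\<forall>U \<subseteq> WL. U \<noteq> {} \<longrightarrow> (\<forall>u\<in>U. \<forall>u'\<in>U. key u = key u') \<longrightarrow> (\<exists>S. is_kernel U (AL key cyc) S)"
  proof (intro allI impI)
    fix U assume a: "U \<subseteq> WL" "U \<noteq> {}" "\<forall>u\<in>U. \<forall>u'\<in>U. key u = key u'"
    then have "U \<subseteq> lab" unfolding WL_def by auto
    then show "\<exists>S. is_kernel U (AL key cyc) S" using fib[rule_format, of U] a(2,3) by blast
  qed
  obtain SL where SL: "is_kernel WL (AL key cyc) SL" using K_layer[OF f1 f2 f3] by blast
  have A1: "AL key cyc \<subseteq> lab \<times> lab" unfolding AL_def Rr_def by auto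
  have A2: "WL \<subseteq> lab" unfolding WL_def by auto
  have "is_kernel (ed ` WL) ((\<lambda>(x,y). (ed x, ed y)) ` AL key cyc) (ed ` SL)"
    by (rule kernel_transfer[OF ed_inj A1 A2 SL])
  then have "is_kernel (ed ` WL) (AE key cyc) (ed ` SL)" unfolding AE_def .
  then show "\<exists>S. is_kernel W (AE key cyc) S" using WW by blast
qed

lemma fib_nocyc:
  "\<forall>U \<subseteq> lab. U \<noteq> {} \<longrightarrow> (\<forall>u\<in>U. \<forall>u'\<in>U. key u = key u') \<longrightarrow> (\<exists>S. is_kernel U (AL key (\<lambda>_ _. False)) S)"
proof (intro allI impI)
  fix U assume "U \<subseteq> lab" "U \<noteq> {}" and c: "\<forall>u\<in>U. \<forall>u'\<in>U. key u = key u'"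
  have "\<forall>u\<in>U. \<forall>v\<in>U. (u,v) \<notin> AL key (\<lambda>_ _. False)"
  proof (intro ballI)
    fix u v assume "u \<in> U" "v \<in> U"
    then have "key v = key u" using c by blast
    then show "(u,v) \<notin> AL key (\<lambda>_ _. False)" by (simp add: AL_def Rr_def)
  qed
  then have "is_kernel U (AL key (\<lambda>_ _. False)) U"
    unfolding is_kernel_def by blast
  then show "\<exists>S. is_kernel U (AL key (\<lambda>_ _. False)) S" by blast
qed

end

context th begin
lemma Out_lab: "Out key cyc l \<subseteq> lab" unfolding Out_def using Rr_D by blast
lemma finite_Out: "finite (Out key cyc l)" by (rule finite_subset[OF Out_lab finite_lab])

lemma outdeg:
  assumes "l \<in> lab"
  shows "out_degree (AE key cyc) (ed l) = card (Out key cyc l)"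
proof -
  have "{u. (ed l, u) \<in> AE key cyc} = ed ` Out key cyc l"
  proof
    show "{u. (ed l, u) \<in> AE key cyc} \<subseteq> ed ` Out key cyc l"
    proof
      fix u assume "u \<in> {u. (ed l, u) \<in> AE key cyc}"
      then obtain a b where ab: "Rr key cyc a b" "ed a = ed l" "u = ed b" unfolding AE_def AL_def by auto
      then have "a \<in> lab" using Rr_D by blast
      then have "a = l" using ed_inj assms ab(2) by (meson inj_on_eq_iff)
      then show "u \<in> ed ` Out key cyc l" using ab unfolding Out_def by auto
    qed
    show "ed ` Out key cyc l \<subseteq> {u. (ed l, u) \<in> AE key cyc}"
    proof
      fix u assume "u \<in> ed ` Out key cyc l"
      then obtain b where "Rr key cyc l b" "u = ed b" unfolding Out_def by auto
      then have "(l,b) \<in> AL key cyc" "u = ed b" by (auto simp add: AL_def)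
      then have "(ed l, ed b) \<in> AE key cyc" unfolding AE_def by (simp add: rev_image_eqI)
      then show "u \<in> {u. (ed l, u) \<in> AE key cyc}" using \<open>u = ed b\<close> by simp
    qed
  qed
  moreover have "inj_on ed (Out key cyc l)" using ed_inj Out_lab by (rule inj_on_subset)
  ultimately show ?thesis unfolding out_degree_def by (simp add: card_image)
qed

lemma out_sub:
  assumes "l \<in> lab"
  shows "Out key cyc l \<subseteq> (\<Union>z\<in>ed l. inc z) - {l}"
proof
  fix l' assume "l' \<in> Out key cyc l"
  then have "Rr key cyc l l'" unfolding Out_def by simp
  then have R: "l' \<in> lab" "l' \<noteq> l" "ed l \<inter> ed l' \<noteq> {}" using Rr_D[of key cyc l l'] by auto
  then obtain z where "z \<in> ed l" "z \<in> ed l'" by blast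
  then have "l' \<in> inc z" using R unfolding inc_def by blast
  then show "l' \<in> (\<Union>z\<in>ed l. inc z) - {l}" using \<open>z \<in> ed l\<close> R by blast
qed

end

context th begin
lemma eo:
  assumes H: "\<forall>l\<in>lab. \<forall>l'\<in>lab. l \<noteq> l' \<and> ed l \<inter> ed l' \<noteq> {} \<and> key l = key l' \<longrightarrow> cyc l l' \<or> cyc l' l"
    and fib: "\<forall>U \<subseteq> lab. U \<noteq> {} \<longrightarrow> (\<forall>u\<in>U. \<forall>u'\<in>U. key u = key u') \<longrightarrow> (\<exists>S. is_kernel U (AL key cyc) S)"
    and F: "\<forall>l\<in>lab. f (ed l) \<ge> 1 + card (Out key cyc l)"
  shows "f_edge_orientable (theta_E qs) f"
  unfolding f_edge_orientable_def f_kernel_perfect_def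
proof (intro exI conjI)
  show "is_orientation (theta_E qs) (line_graph_edges (theta_E qs)) (AE key cyc)" using orient[OF H] .
  show "kernel_perfect (theta_E qs) (AE key cyc)" using kp[OF fib] .
  show "\<forall>v\<in>theta_E qs. 1 + out_degree (AE key cyc) v \<le> f v"
    using F outdeg unfolding E_eq by auto
qed

end

context th begin

definition sE :: "bool \<Rightarrow> nat \<Rightarrow> nat" where "sE sd i = (if sd then 0 else qs!i - 1)"
definition sN :: "bool \<Rightarrow> nat \<Rightarrow> nat" where "sN sd i = (if sd then 1 else qs!i - 2)"
definition xs :: "bool \<Rightarrow> nat \<times> nat" where "xs sd = (if sd then (0,0) else (0,1))"
definition sV :: "bool \<Rightarrow> nat \<Rightarrow> nat \<times> nat" where "sV sd i = (Suc i, if sd then 1 else qs!i - 1)"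

lemma sE_lt: "i < r \<Longrightarrow> sE sd i < qs!i" using q2[of i] by (auto simp: sE_def)
lemma sN_lt: "i < r \<Longrightarrow> sN sd i < qs!i" using q2[of i] by (auto simp: sN_def)
lemma sN_ne: "i < r \<Longrightarrow> sN sd i \<noteq> sE sd i" using q2[of i] by (auto simp: sN_def sE_def)
lemma sE_ne: "i < r \<Longrightarrow> sE sd i \<noteq> sE (\<not>sd) i" using q2[of i] by (auto simp: sE_def)

lemma ed_end: "i < r \<Longrightarrow> ed (Suc i, sE sd i) = {xs sd, sV sd i}"
  using q2[of i] by (auto simp: sE_def xs_def sV_def theta_pv_def)

lemma inc_sV: "i < r \<Longrightarrow> inc (sV sd i) = {(Suc i, sE sd i), (Suc i, sN sd i)}"
proof (cases sd)
  case True
  assume "i < r" then show ?thesis using True q2[of i] inc_int[of i 1] by (simp add: sV_def sE_def sN_def)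
next
  case False
  assume "i < r"
  moreover have "qs!i - 1 - 1 = qs!i - 2" by simp
  ultimately show ?thesis using False q2[of i] inc_int[of i "qs!i - 1"] by (simp add: sV_def sE_def sN_def insert_commute)
qed

lemma inc_x2s: "inc (0, Suc 0) = insert (0,0) ((\<lambda>i. (Suc i, qs!i - Suc 0)) ` {..<r})"
  using inc_x2 by simp
lemma card_x2s: "card (inc (0, Suc 0)) = Suc r" using card_x2 by simp

lemma inc_xs: "inc (xs sd) = insert (0,0) ((\<lambda>i. (Suc i, sE sd i)) ` {..<r})"
  by (cases sd) (simp_all add: xs_def sE_def inc_x1 inc_x2s)

lemma card_xs: "card (inc (xs sd)) = r + 1"
  by (cases sd) (simp_all add: xs_def card_x1 card_x2s)

lemma end_in_xs: "i < r \<Longrightarrow> (Suc i, sE sd i) \<in> inc (xs sd)"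
  unfolding inc_xs by blast

lemma out_end_gen:
  assumes i: "i < r"
  shows "Out key cyc (Suc i, sE sd i) \<subseteq> (inc (xs sd) - {(Suc i, sE sd i)}) \<union> {(Suc i, sN sd i)}"
proof -
  have "(Suc i, sE sd i) \<in> lab" using sE_lt[OF i] i by simp
  then have s1: "Out key cyc (Suc i, sE sd i) \<subseteq> (\<Union>z\<in>ed (Suc i, sE sd i). inc z) - {(Suc i, sE sd i)}"
    by (rule out_sub)
  have s2: "(\<Union>z\<in>ed (Suc i, sE sd i). inc z) = inc (xs sd) \<union> inc (sV sd i)" using ed_end[OF i] by simp
  show ?thesis
  proof
    fix y assume y: "y \<in> Out key cyc (Suc i, sE sd i)"
    then have y1: "y \<in> (\<Union>z\<in>ed (Suc i, sE sd i). inc z)" "y \<noteq> (Suc i, sE sd i)" using s1 by blast+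
    from y1(1) have "y \<in> inc (xs sd) \<union> inc (sV sd i)" by (simp only: s2)
    then show "y \<in> (inc (xs sd) - {(Suc i, sE sd i)}) \<union> {(Suc i, sN sd i)}"
      using y1(2) inc_sV[OF i, of sd] by blast
  qed
qed

lemma out_end1:
  assumes i: "i < r"
  shows "card (Out key cyc (Suc i, sE sd i)) \<le> r + 1"
proof -
  have "card (Out key cyc (Suc i, sE sd i)) \<le> card ((inc (xs sd) - {(Suc i, sE sd i)}) \<union> {(Suc i, sN sd i)})"
    by (rule card_mono[OF _ out_end_gen[OF i]]) (simp add: finite_inc)
  also have "\<dots> \<le> card (inc (xs sd) - {(Suc i, sE sd i)}) + card {(Suc i, sN sd i)}" by (rule card_Un_le)
  also have "\<dots> = r + 1" using card_xs[of sd] end_in_xs[OF i] finite_inc by simp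
  finally show ?thesis .
qed

lemma out_end2:
  assumes i: "i < r"
    and h: "(\<exists>h \<in> inc (xs sd). h \<noteq> (Suc i, sE sd i) \<and> \<not> Rr key cyc (Suc i, sE sd i) h) \<or> \<not> Rr key cyc (Suc i, sE sd i) (Suc i, sN sd i)"
  shows "card (Out key cyc (Suc i, sE sd i)) \<le> r"
proof -
  let ?l = "(Suc i, sE sd i)"
  let ?X = "inc (xs sd) - {?l}"
  have cX: "card ?X = r" using card_xs[of sd] end_in_xs[OF i] finite_inc by simp
  have fX: "finite ?X" using finite_inc by simp
  show ?thesis using h
  proof
    assume "\<exists>h \<in> inc (xs sd). h \<noteq> ?l \<and> \<not> Rr key cyc ?l h"
    then obtain h where h: "h \<in> ?X" "\<not> Rr key cyc ?l h" by blast
    have "Out key cyc ?l \<subseteq> (?X - {h}) \<union> {(Suc i, sN sd i)}"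
      using out_end_gen[OF i, of key cyc sd] h(2) unfolding Out_def by blast
    then have "card (Out key cyc ?l) \<le> card ((?X - {h}) \<union> {(Suc i, sN sd i)})"
      by (rule card_mono[rotated]) (simp add: fX finite_inc)
    also have "\<dots> \<le> card (?X - {h}) + card {(Suc i, sN sd i)}" by (rule card_Un_le)
    also have "\<dots> = r"
    proof -
      have "card (?X - {h}) = r - 1" using cX h(1) fX by (simp add: card_Diff_singleton)
      moreover have "r \<ge> 1" by (rule len)
      ultimately show ?thesis by simp
    qed
    finally show ?thesis .
  next
    assume "\<not> Rr key cyc ?l (Suc i, sN sd i)"
    then have "Out key cyc ?l \<subseteq> ?X"
    proof -
      assume nr: "\<not> Rr key cyc ?l (Suc i, sN sd i)"
      show "Out key cyc ?l \<subseteq> ?X"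
      proof
        fix y assume y: "y \<in> Out key cyc ?l"
        then have "y \<in> ?X \<union> {(Suc i, sN sd i)}" using out_end_gen[OF i, of key cyc sd] by blast
        moreover have "y \<noteq> (Suc i, sN sd i)" using y nr unfolding Out_def by auto
        ultimately show "y \<in> ?X" by blast
      qed
    qed
    then have "card (Out key cyc ?l) \<le> card ?X" by (rule card_mono[rotated]) (simp add: fX finite_inc)
    then show ?thesis using cX by simp
  qed
qed

lemma out_int:
  assumes "i < r" "0 < j" "Suc j < qs!i"
  shows "Out key cyc (Suc i, j) \<subseteq> {(Suc i, j - 1), (Suc i, Suc j)}"
proof -
  have "(Suc i, j) \<in> lab" using assms by simp
  then have s1: "Out key cyc (Suc i, j) \<subseteq> (\<Union>z\<in>ed (Suc i, j). inc z) - {(Suc i, j)}" by (rule out_sub)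
  have "ed (Suc i, j) = {(Suc i, j), (Suc i, Suc j)}" using assms by (simp add: pvint)
  moreover have "inc (Suc i, j) = {(Suc i, j - 1), (Suc i, j)}" using assms by (simp add: inc_int)
  moreover have "inc (Suc i, Suc j) = {(Suc i, j), (Suc i, Suc j)}" using assms inc_int[of i "Suc j"] by simp
  ultimately have s2: "(\<Union>z\<in>ed (Suc i, j). inc z) = {(Suc i, j - 1), (Suc i, j), (Suc i, Suc j)}" by auto
  show ?thesis
  proof
    fix y assume y: "y \<in> Out key cyc (Suc i, j)"
    then have y1: "y \<in> (\<Union>z\<in>ed (Suc i, j). inc z)" "y \<noteq> (Suc i, j)" using s1 by blast+
    from y1(1) have "y \<in> {(Suc i, j - 1), (Suc i, j), (Suc i, Suc j)}" by (simp only: s2)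
    then show "y \<in> {(Suc i, j - 1), (Suc i, Suc j)}" using y1(2) by blast
  qed
qed

lemma out_int_card:
  assumes "i < r" "0 < j" "Suc j < qs!i"
  shows "card (Out key cyc (Suc i, j)) \<le> 2"
proof -
  have "card (Out key cyc (Suc i, j)) \<le> card {(Suc i, j - 1), (Suc i, Suc j)}"
    by (rule card_mono[OF _ out_int[OF assms]]) simp
  also have "\<dots> \<le> 2" by (simp add: card_insert_le_m1)
  finally show ?thesis .
qed

lemma out_S:
  "card (Out key cyc (0,0)) \<le> 2 * r"
proof -
  have "Out key cyc (0,0) \<subseteq> (\<Union>z\<in>ed (0,0). inc z) - {(0,0)}" by (rule out_sub) simp
  also have "\<dots> = (inc (0,0) - {(0,0)}) \<union> (inc (0,1) - {(0,0)})" by auto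
  finally have s: "Out key cyc (0,0) \<subseteq> (inc (0,0) - {(0,0)}) \<union> (inc (0,1) - {(0,0)})" .
  have "card (Out key cyc (0,0)) \<le> card ((inc (0,0) - {(0,0)}) \<union> (inc (0,1) - {(0,0)}))"
    by (rule card_mono[OF _ s]) (simp add: finite_inc)
  also have "\<dots> \<le> card (inc (0,0) - {(0,0)}) + card (inc (0,1) - {(0,0)})" by (rule card_Un_le)
  also have "\<dots> = 2 * r"
  proof -
    have m1: "(0,0) \<in> inc (0,0)" "(0,0) \<in> inc (0,1)" unfolding inc_def by simp_all
    have "card (inc (0,0) - {(0,0)}) = r" using card_x1 m1(1) finite_inc by (simp add: card_Diff_singleton)
    moreover have "card (inc (0,1) - {(0,0)}) = r" using card_x2 m1(2) finite_inc by (simp add: card_Diff_singleton)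
    ultimately show ?thesis by simp
  qed
  finally show ?thesis .
qed

lemma lab_class:
  assumes "l \<in> lab"
  obtains "l = (0,0)"
    | i sd where "i < r" "l = (Suc i, sE sd i)"
    | i j where "i < r" "0 < j" "Suc j < qs!i" "l = (Suc i, j)"
proof (cases rule: lab_cases[OF assms])
  case 1 then show ?thesis using that by blast
next
  case (2 i j)
  show ?thesis
  proof (cases "j = 0")
    case True then show ?thesis using that(2)[of i True] 2 by (simp add: sE_def)
  next
    case False
    show ?thesis
    proof (cases "Suc j = qs!i")
      case True then show ?thesis using that(2)[of i False] 2 by (simp add: sE_def)
    next
      case False
      then show ?thesis using that(3)[of i j] 2 \<open>j \<noteq> 0\<close> by simp
    qed
  qed
qed

end

context th begin

definition lvB :: "bool \<Rightarrow> nat\<times>nat \<Rightarrow> nat\<times>nat \<Rightarrow> nat \<Rightarrow> nat\<times>nat \<Rightarrow> nat" where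
  "lvB sd a b t l = (if l = a then 0 else if l = b then 1 else if fst l = 0 then 2
     else if fst l = Suc t then (if snd l = 0 \<or> snd l = qs!t - 1 then 5 else 6)
     else if snd l = sE sd (fst l - 1) then 3 else if snd l = sE (\<not>sd) (fst l - 1) then 4 else 6)"

definition keyB :: "bool \<Rightarrow> nat\<times>nat \<Rightarrow> nat\<times>nat \<Rightarrow> nat \<Rightarrow> nat\<times>nat \<Rightarrow> nat\<times>nat\<times>nat" where
  "keyB sd a b t l = (lvB sd a b t l, l)"

lemma keyB_le: "Rr (keyB sd a b t) cyc l h \<Longrightarrow> lvB sd a b t h \<le> lvB sd a b t l"
  using Rr_le[of "keyB sd a b t" cyc l h] unfolding keyB_def by auto

lemma keyB_gt: "lvB sd a b t l < lvB sd a b t h \<Longrightarrow> \<not> Rr (keyB sd a b t) cyc l h"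
  using keyB_le[of sd a b t cyc l h] by linarith

lemma lv0: "lvB sd a b t y = 0 \<Longrightarrow> y = a" unfolding lvB_def by (simp split: if_splits)
lemma lv1: "lvB sd a b t y \<le> 1 \<Longrightarrow> y = a \<or> y = b" unfolding lvB_def by (simp split: if_splits)
lemma lv2: "lvB sd a b t y \<le> 2 \<Longrightarrow> y = a \<or> y = b \<or> fst y = 0" unfolding lvB_def by (simp split: if_splits)

lemma B_a: "Out (keyB sd a b t) cyc a = {}"
proof -
  have "\<not> Rr (keyB sd a b t) cyc a y" for y
  proof
    assume R: "Rr (keyB sd a b t) cyc a y"
    then have "lvB sd a b t y \<le> lvB sd a b t a" by (rule keyB_le)
    moreover have "lvB sd a b t a = 0" unfolding lvB_def by simp
    ultimately have "y = a" using lv0 by simp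
    then show False using R Rr_D by blast
  qed
  then show ?thesis unfolding Out_def by blast
qed

lemma B_b: "a \<noteq> b \<Longrightarrow> Out (keyB sd a b t) cyc b \<subseteq> {a}"
proof
  fix y assume ab: "a \<noteq> b" and "y \<in> Out (keyB sd a b t) cyc b"
  then have R: "Rr (keyB sd a b t) cyc b y" unfolding Out_def by simp
  then have "lvB sd a b t y \<le> lvB sd a b t b" by (rule keyB_le)
  moreover have "lvB sd a b t b = 1" using ab unfolding lvB_def by simp
  ultimately have "y = a \<or> y = b" using lv1 by simp
  moreover have "y \<noteq> b" using R Rr_D by blast
  ultimately show "y \<in> {a}" by simp
qed

lemma B_S: "(0,0) \<noteq> a \<Longrightarrow> (0,0) \<noteq> b \<Longrightarrow> Out (keyB sd a b t) cyc (0,0) \<subseteq> {a,b}"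
proof
  fix y assume ab: "(0,0) \<noteq> a" "(0,0) \<noteq> b" and "y \<in> Out (keyB sd a b t) cyc (0,0)"
  then have R: "Rr (keyB sd a b t) cyc (0,0) y" unfolding Out_def by simp
  then have "lvB sd a b t y \<le> lvB sd a b t (0,0)" by (rule keyB_le)
  moreover have "lvB sd a b t (0,0) = 2" using ab unfolding lvB_def by simp
  ultimately have "y = a \<or> y = b \<or> fst y = 0" using lv2 by simp
  moreover have "y \<noteq> (0,0)" "y \<in> lab" using R Rr_D by blast+
  moreover have "y \<in> lab \<Longrightarrow> fst y = 0 \<Longrightarrow> y = (0,0)" by (cases y) simp
  ultimately show "y \<in> {a,b}" by blast
qed

lemma lv_s: "i < r \<Longrightarrow> i \<noteq> t \<Longrightarrow> (Suc i, sE sd i) \<noteq> a \<Longrightarrow> (Suc i, sE sd i) \<noteq> b \<Longrightarrow>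
  lvB sd a b t (Suc i, sE sd i) = 3"
  unfolding lvB_def by simp

lemma lv_o: "i < r \<Longrightarrow> i \<noteq> t \<Longrightarrow> (Suc i, sE (\<not>sd) i) \<noteq> a \<Longrightarrow> (Suc i, sE (\<not>sd) i) \<noteq> b \<Longrightarrow>
  lvB sd a b t (Suc i, sE (\<not>sd) i) = 4"
  using sE_ne[of i sd] unfolding lvB_def by simp

lemma lv_t5: "(Suc t, j) \<noteq> a \<Longrightarrow> (Suc t, j) \<noteq> b \<Longrightarrow> j = 0 \<or> j = qs!t - 1 \<Longrightarrow> lvB sd a b t (Suc t, j) = 5"
  unfolding lvB_def by auto

lemma lv_t6: "(Suc t, j) \<noteq> a \<Longrightarrow> (Suc t, j) \<noteq> b \<Longrightarrow> j \<noteq> 0 \<Longrightarrow> j \<noteq> qs!t - 1 \<Longrightarrow> lvB sd a b t (Suc t, j) = 6"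
  unfolding lvB_def by auto

lemma lv_sN: "i < r \<Longrightarrow> i \<noteq> t \<Longrightarrow> (Suc i, sN sd i) \<noteq> a \<Longrightarrow> (Suc i, sN sd i) \<noteq> b \<Longrightarrow>
  lvB sd a b t (Suc i, sN sd i) > 3"
  using sN_ne[of i sd] unfolding lvB_def by simp

lemma sE_t: "sE sd t = 0 \<or> sE sd t = qs!t - 1" unfolding sE_def by simp
lemma sN_t: "4 \<le> qs!t \<Longrightarrow> sN sd t \<noteq> 0 \<and> sN sd t \<noteq> qs!t - 1" unfolding sN_def by auto

lemma B_ends:
  assumes t: "t < r" "4 \<le> qs!t"
    and H1: "\<forall>i<r. i \<noteq> t \<longrightarrow> (Suc i, sE sd i) \<notin> {a,b} \<longrightarrow> (Suc i, sN sd i) \<notin> {a,b}"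
    and H2: "(Suc t, sE (\<not>sd) t) \<notin> {a,b}"
    and H3: "(Suc t, sE sd t) \<notin> {a,b} \<longrightarrow> (Suc t, sN sd t) \<notin> {a,b}"
    and H4: "(Suc t, sN (\<not>sd) t) \<notin> {a,b}"
    and i: "i < r" and l: "(Suc i, sE sd' i) \<notin> {a,b}"
  shows "card (Out (keyB sd a b t) cyc (Suc i, sE sd' i)) \<le> r"
proof (rule out_end2[OF i])
  let ?l = "(Suc i, sE sd' i)"
  let ?lv = "lvB sd a b t"
  show "(\<exists>h \<in> inc (xs sd'). h \<noteq> ?l \<and> \<not> Rr (keyB sd a b t) cyc ?l h) \<or> \<not> Rr (keyB sd a b t) cyc ?l (Suc i, sN sd' i)"
  proof (cases "i = t")
    case True
    have "(Suc t, sN sd' t) \<notin> {a,b}"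
    proof (cases "sd' = sd")
      case True then show ?thesis using H3 l \<open>i = t\<close> by simp
    next
      case False then have "sd' = (\<not>sd)" by simp
      then show ?thesis using H4 by simp
    qed
    then have "?lv (Suc i, sN sd' i) = 6" using True lv_t6 sN_t[OF t(2), of sd'] by simp
    moreover have "?lv ?l = 5" using True lv_t5 l sE_t[of sd'] by simp
    ultimately show ?thesis using keyB_gt[of sd a b t ?l "(Suc i, sN sd' i)" cyc] by simp
  next
    case False
    show ?thesis
    proof (cases "sd' = sd")
      case True
      have "(Suc i, sN sd i) \<notin> {a,b}" using H1 i False l True by simp
      then have "?lv (Suc i, sN sd i) > 3" using lv_sN[OF i False] by simp
      moreover have "?lv ?l = 3" using lv_s[OF i False] l True by simp
      ultimately show ?thesis using keyB_gt[of sd a b t ?l "(Suc i, sN sd' i)" cyc] True by simp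
    next
      case False2: False
      then have sd': "sd' = (\<not>sd)" by simp
      let ?h = "(Suc t, sE (\<not>sd) t)"
      have "?h \<in> inc (xs sd')" using end_in_xs[OF t(1)] sd' by simp
      moreover have "?h \<noteq> ?l" using False by simp
      moreover have "?lv ?h = 5" using lv_t5 H2 sE_t[of "\<not>sd"] by simp
      moreover have "?lv ?l = 4" using lv_o[OF i False] l sd' by simp
      ultimately show ?thesis using keyB_gt[of sd a b t ?l ?h cyc] by auto
    qed
  qed
qed

end

context th begin

lemma fkv: "l \<in> lab \<Longrightarrow> f_kv (theta_E qs) p v (ed l) = (if l \<in> inc v then card (inc v) else p)"
  unfolding f_kv_def inc_def degree_eq by simp

lemma keyB_H: "\<forall>l\<in>lab. \<forall>l'\<in>lab. l \<noteq> l' \<and> ed l \<inter> ed l' \<noteq> {} \<and> keyB sd a b t l = keyB sd a b t l' \<longrightarrow> (\<lambda>_ _. False) l l' \<or> (\<lambda>_ _. False) l' l"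
  unfolding keyB_def by blast

lemma case1:
  assumes v: "v = (0,0) \<or> v = (0,1)"
    and t: "t < r" "4 \<le> qs!t"
    and p: "3 \<le> p" "r + 1 \<le> p"
  shows "f_edge_orientable (theta_E qs) (f_kv (theta_E qs) p v)"
proof (rule eo[OF keyB_H fib_nocyc])
  let ?k = "keyB True (0,1) (0,2) t"
  have cv: "card (inc v) = r + 1" using v card_x1 card_x2 by auto
  show "\<forall>l\<in>lab. 1 + card (Out ?k (\<lambda>_ _. False) l) \<le> f_kv (theta_E qs) p v (ed l)"
  proof
    fix l assume l: "l \<in> lab"
    show "1 + card (Out ?k (\<lambda>_ _. False) l) \<le> f_kv (theta_E qs) p v (ed l)"
    proof (cases rule: lab_class[OF l])
      case 1
      have "Out ?k (\<lambda>_ _. False) l \<subseteq> {(0,1),(0,2)}" using B_S[of "(0,1)" "(0,2)"] 1 by simp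
      moreover have "Out ?k (\<lambda>_ _. False) l \<subseteq> lab" by (rule Out_lab)
      moreover have "(0,1) \<notin> lab" "(0,2) \<notin> lab" by simp_all
      ultimately have "Out ?k (\<lambda>_ _. False) l = {}" by blast
      then show ?thesis using fkv[OF l, of p v] cv p by simp
    next
      case (2 i sd')
      have "card (Out ?k (\<lambda>_ _. False) l) \<le> r"
        unfolding 2(2) by (rule B_ends[OF t]) (simp_all add: 2)
      then show ?thesis using fkv[OF l, of p v] cv p by simp
    next
      case (3 i j)
      have "card (Out ?k (\<lambda>_ _. False) l) \<le> 2" unfolding 3(4) by (rule out_int_card[OF 3(1-3)])
      moreover have "l \<notin> inc v" using v 3 unfolding inc_def by (auto simp: theta_pv_def)
      ultimately show ?thesis using fkv[OF l, of p v] p by simp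
    qed
  qed
qed

lemma case2:
  assumes v: "i0 < r" "0 < j0" "j0 < qs!i0"
    and ab: "inc (Suc i0, j0) = {a,b}" "a \<noteq> b"
    and t: "t < r" "4 \<le> qs!t"
    and Hs: "r = 1 \<or> ((\<forall>i<r. i \<noteq> t \<longrightarrow> (Suc i, sE sd i) \<notin> {a,b} \<longrightarrow> (Suc i, sN sd i) \<notin> {a,b}) \<and>
        (Suc t, sE (\<not>sd) t) \<notin> {a,b} \<and>
        ((Suc t, sE sd t) \<notin> {a,b} \<longrightarrow> (Suc t, sN sd t) \<notin> {a,b}) \<and>
        (Suc t, sN (\<not>sd) t) \<notin> {a,b})"
    and p: "3 \<le> p" "r + 1 \<le> p"
  shows "f_edge_orientable (theta_E qs) (f_kv (theta_E qs) p (Suc i0, j0))"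
proof (rule eo[OF keyB_H fib_nocyc])
  let ?k = "keyB sd a b t"
  let ?v = "(Suc i0, j0)"
  have cv: "card (inc ?v) = 2" using ab by simp
  have abS: "(0,0) \<noteq> a" "(0,0) \<noteq> b"
  proof -
    have "a \<in> inc ?v" "b \<in> inc ?v" using ab by auto
    then show "(0,0) \<noteq> a" "(0,0) \<noteq> b" unfolding inc_def using v by (auto simp: theta_pv_def)
  qed
  show "\<forall>l\<in>lab. 1 + card (Out ?k (\<lambda>_ _. False) l) \<le> f_kv (theta_E qs) p ?v (ed l)"
  proof
    fix l assume l: "l \<in> lab"
    show "1 + card (Out ?k (\<lambda>_ _. False) l) \<le> f_kv (theta_E qs) p ?v (ed l)"
    proof (cases "l \<in> {a,b}")
      case True
      have "card (Out ?k (\<lambda>_ _. False) l) \<le> 1"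
      proof (cases "l = a")
        case True then show ?thesis using B_a by simp
      next
        case False
        then have "l = b" using \<open>l \<in> {a,b}\<close> by simp
        then have "Out ?k (\<lambda>_ _. False) l \<subseteq> {a}" using B_b[OF ab(2)] by simp
        then show ?thesis using card_mono[of "{a}" "Out ?k (\<lambda>_ _. False) l"] by simp
      qed
      moreover have "l \<in> inc ?v" using True ab by simp
      ultimately show ?thesis using fkv[OF l, of p ?v] cv by simp
    next
      case False
      then have nv: "l \<notin> inc ?v" using ab by simp
      have "card (Out ?k (\<lambda>_ _. False) l) \<le> p - 1"
      proof (cases rule: lab_class[OF l])
        case 1
        then have "Out ?k (\<lambda>_ _. False) l \<subseteq> {a,b}" using B_S[OF abS] by simp
        then have "card (Out ?k (\<lambda>_ _. False) l) \<le> card {a,b}" by (rule card_mono[rotated]) simp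
        also have "\<dots> \<le> 2" by (simp add: card_insert_le_m1)
        finally show ?thesis using p by simp
      next
        case (2 i sd')
        show ?thesis using Hs
        proof
          assume "r = 1"
          then show ?thesis using out_end1[OF 2(1), of ?k "\<lambda>_ _. False" sd'] 2(2) p by simp
        next
          assume H: "(\<forall>i<r. i \<noteq> t \<longrightarrow> (Suc i, sE sd i) \<notin> {a,b} \<longrightarrow> (Suc i, sN sd i) \<notin> {a,b}) \<and>
            (Suc t, sE (\<not>sd) t) \<notin> {a,b} \<and>
            ((Suc t, sE sd t) \<notin> {a,b} \<longrightarrow> (Suc t, sN sd t) \<notin> {a,b}) \<and>
            (Suc t, sN (\<not>sd) t) \<notin> {a,b}"
          have "card (Out ?k (\<lambda>_ _. False) (Suc i, sE sd' i)) \<le> r"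
            by (rule B_ends[OF t]) (use H 2 False in simp_all)
          then show ?thesis using 2(2) p by simp
        qed
      next
        case (3 i j)
        have "card (Out ?k (\<lambda>_ _. False) l) \<le> 2" unfolding 3(4) by (rule out_int_card[OF 3(1-3)])
        then show ?thesis using p by simp
      qed
      then show ?thesis using fkv[OF l, of p ?v] nv p by simp
    qed
  qed
qed

end

context th begin

definition inC :: "nat \<Rightarrow> nat \<Rightarrow> nat\<times>nat \<Rightarrow> bool" where
  "inC i0 k l \<longleftrightarrow> l \<in> lab \<and> (fst l = Suc i0 \<or> fst l = Suc k)"

definition succC :: "nat \<Rightarrow> nat \<Rightarrow> nat\<times>nat \<Rightarrow> nat\<times>nat" where
  "succC i0 k l = (if fst l = Suc i0 then (if Suc (snd l) < qs!i0 then (Suc i0, Suc (snd l)) else (Suc k, qs!k - 1))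
     else (if 0 < snd l then (Suc k, snd l - 1) else (Suc i0, 0)))"

definition cycC :: "nat \<Rightarrow> nat \<Rightarrow> nat\<times>nat \<Rightarrow> nat\<times>nat \<Rightarrow> bool" where
  "cycC i0 k l l' \<longleftrightarrow> inC i0 k l \<and> inC i0 k l' \<and> l' = succC i0 k l"

definition keyC :: "nat \<Rightarrow> nat \<Rightarrow> nat\<times>nat \<Rightarrow> nat\<times>nat\<times>nat" where
  "keyC i0 k l = (if inC i0 k l then (2,0,0) else if l = (0,0) then (0, l) else (1, l))"

definition cC :: "nat \<Rightarrow> nat \<Rightarrow> nat \<Rightarrow> nat\<times>nat" where
  "cC i0 k j = (if j < qs!i0 then (Suc i0, j) else (Suc k, qs!k - 1 - (j - qs!i0)))"

lemma ed_cases: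
  assumes "l \<in> lab" "z \<in> ed l"
  shows "z = (0,0) \<or> z = (0,1) \<or> (\<exists>i m. i < r \<and> 0 < m \<and> m < qs!i \<and> z = (Suc i, m))"
proof (cases rule: lab_cases[OF assms(1)])
  case 1 then have "z \<in> {(0,0),(0,1)}" using assms by simp
  then show ?thesis by blast
next
  case (2 i j)
  then show ?thesis using assms by (auto simp: theta_pv_def split: if_splits)
qed

context
  fixes i0 k
  assumes ik: "i0 < r" "k < r" "i0 \<noteq> k" "4 \<le> qs!i0"
begin

lemma qk2: "2 \<le> qs!k" using q2 ik by simp

lemma succ_adj: "inC i0 k l \<Longrightarrow> ed l \<inter> ed (succC i0 k l) \<noteq> {}"
proof -
  assume l: "inC i0 k l"
  obtain i j where lij: "l = (Suc i, j)" "i < r" "j < qs!i" "i = i0 \<or> i = k"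
    using l unfolding inC_def by (cases l) (auto elim: lab_cases)
  show ?thesis
  proof (cases "i = i0")
    case True
    show ?thesis
    proof (cases "Suc j < qs!i0")
      case True
      then have "pv i0 (Suc j) \<in> ed l \<inter> ed (succC i0 k l)"
        using lij \<open>i = i0\<close> unfolding succC_def by simp
      then show ?thesis by blast
    next
      case False
      then have "Suc j = qs!i0" using lij True by simp
      then have "(0,1) \<in> ed l" using lij True ik by (simp add: theta_pv_def)
      moreover have "(0,1) \<in> ed (succC i0 k l)" using lij True False ik qk2 unfolding succC_def
        by (simp add: theta_pv_def)
      ultimately show ?thesis by blast
    qed
  next
    case False
    then have ik': "i = k" using lij by simp
    show ?thesis
    proof (cases "0 < j")
      case True
      then have "pv k j \<in> ed l \<inter> ed (succC i0 k l)"
        using lij ik' ik unfolding succC_def by simp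
      then show ?thesis by blast
    next
      case False
      then have "(0,0) \<in> ed l \<inter> ed (succC i0 k l)" using lij ik' ik unfolding succC_def by simp
      then show ?thesis by blast
    qed
  qed
qed

lemma succ_inC: "inC i0 k l \<Longrightarrow> inC i0 k (succC i0 k l)"
  using ik qk2 unfolding inC_def succC_def by (cases l) (auto elim: lab_cases)

lemma s1: "succC i0 k (Suc k, 0) = (Suc i0, 0)" using ik unfolding succC_def by simp
lemma s2: "succC i0 k (Suc i0, qs!i0 - 1) = (Suc k, qs!k - 1)" using ik unfolding succC_def by simp
lemma s3: "m < qs!i0 \<Longrightarrow> 0 < m \<Longrightarrow> succC i0 k (Suc i0, m - 1) = (Suc i0, m)" unfolding succC_def by simp
lemma s4: "0 < m \<Longrightarrow> succC i0 k (Suc k, m) = (Suc k, m - 1)" using ik unfolding succC_def by simp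

lemma adj_cons:
  assumes l: "inC i0 k l" and l': "inC i0 k l'" and ne: "l \<noteq> l'" and z: "z \<in> ed l" "z \<in> ed l'"
  shows "l' = succC i0 k l \<or> l = succC i0 k l'"
proof -
  have lab: "l \<in> lab" "l' \<in> lab" using l l' unfolding inC_def by auto
  have inz: "l \<in> inc z" "l' \<in> inc z" using lab z unfolding inc_def by auto
  have fl: "fst l = Suc i0 \<or> fst l = Suc k" "fst l' = Suc i0 \<or> fst l' = Suc k" using l l' unfolding inC_def by auto
  consider "z = (0,0)" | "z = (0,1)" | i m where "i < r" "0 < m" "m < qs!i" "z = (Suc i, m)"
    using ed_cases[OF lab(1) z(1)] by blast
  then show ?thesis
  proof cases
    case 1
    then have "l \<in> {(Suc i0, 0), (Suc k, 0)}" "l' \<in> {(Suc i0, 0), (Suc k, 0)}"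
      using inz fl by (auto simp: inc_x1)
    then have "(l = (Suc k, 0) \<and> l' = (Suc i0, 0)) \<or> (l' = (Suc k, 0) \<and> l = (Suc i0, 0))" using ne by blast
    then show ?thesis using s1 by metis
  next
    case 2
    then have "l \<in> {(Suc i0, qs!i0 - 1), (Suc k, qs!k - 1)}" "l' \<in> {(Suc i0, qs!i0 - 1), (Suc k, qs!k - 1)}"
      using inz fl by (auto simp: inc_x2 inc_x2s)
    then have "(l = (Suc i0, qs!i0 - 1) \<and> l' = (Suc k, qs!k - 1)) \<or> (l' = (Suc i0, qs!i0 - 1) \<and> l = (Suc k, qs!k - 1))" using ne by blast
    then show ?thesis using s2 by metis
  next
    case (3 i m)
    then have m: "l \<in> {(Suc i, m - 1), (Suc i, m)}" "l' \<in> {(Suc i, m - 1), (Suc i, m)}"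
      using inz inc_int[of i m] by auto
    then have i: "i = i0 \<or> i = k" using fl by auto
    from m ne have o: "(l = (Suc i, m - 1) \<and> l' = (Suc i, m)) \<or> (l' = (Suc i, m - 1) \<and> l = (Suc i, m))" by blast
    show ?thesis using i
    proof
      assume "i = i0"
      then have "succC i0 k (Suc i, m - 1) = (Suc i, m)" using s3 3 by simp
      then show ?thesis using o by metis
    next
      assume "i = k"
      then have "succC i0 k (Suc i, m) = (Suc i, m - 1)" using s4 3 by simp
      then show ?thesis using o by metis
    qed
  qed
qed

lemma C_H: "\<forall>l\<in>lab. \<forall>l'\<in>lab. l \<noteq> l' \<and> ed l \<inter> ed l' \<noteq> {} \<and> keyC i0 k l = keyC i0 k l' \<longrightarrow> cycC i0 k l l' \<or> cycC i0 k l' l"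
proof (intro ballI impI)
  fix l l' assume "l \<in> lab" "l' \<in> lab" and a: "l \<noteq> l' \<and> ed l \<inter> ed l' \<noteq> {} \<and> keyC i0 k l = keyC i0 k l'"
  have "inC i0 k l \<and> inC i0 k l'"
  proof (rule ccontr)
    assume "\<not> (inC i0 k l \<and> inC i0 k l')"
    then show False using a unfolding keyC_def by (auto split: if_splits)
  qed
  moreover obtain z where "z \<in> ed l" "z \<in> ed l'" using a by blast
  ultimately show "cycC i0 k l l' \<or> cycC i0 k l' l" using adj_cons a unfolding cycC_def by blast
qed

abbreviation "nC \<equiv> qs!i0 + qs!k"

lemma cC_inC: "j < nC \<Longrightarrow> inC i0 k (cC i0 k j)"
  using ik unfolding cC_def inC_def by auto

lemma cC_inj: "inj_on (cC i0 k) {..<nC}"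
  unfolding inj_on_def cC_def using ik by (auto split: if_splits)

lemma cC_onto: "inC i0 k l \<Longrightarrow> l \<in> cC i0 k ` {..<nC}"
proof -
  assume l: "inC i0 k l"
  obtain i j where lij: "l = (Suc i, j)" "j < qs!i" "i = i0 \<or> i = k"
    using l unfolding inC_def by (cases l) (auto elim: lab_cases)
  show ?thesis
  proof (cases "i = i0")
    case True
    then have "cC i0 k j = l" using lij unfolding cC_def by simp
    moreover have "j < nC" using lij True by simp
    ultimately show ?thesis by force
  next
    case False
    then have i: "i = k" using lij by simp
    define jj where "jj = qs!i0 + (qs!k - 1 - j)"
    have "jj < nC" using lij i unfolding jj_def by simp
    moreover have "cC i0 k jj = l"
    proof -
      have "\<not> jj < qs!i0" unfolding jj_def by simp
      moreover have "qs!k - 1 - (jj - qs!i0) = j" using lij i unfolding jj_def by simp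
      ultimately show ?thesis using lij i unfolding cC_def by simp
    qed
    ultimately show ?thesis by force
  qed
qed

lemma succ_cC: "j < nC \<Longrightarrow> succC i0 k (cC i0 k j) = cC i0 k (Suc j mod nC)"
proof -
  assume j: "j < nC"
  show ?thesis
  proof (cases "Suc j < nC")
    case True
    then have m: "Suc j mod nC = Suc j" by simp
    show ?thesis unfolding m using True ik qk2 unfolding succC_def cC_def by auto
  next
    case False
    then have "Suc j = nC" using j by simp
    then have m: "Suc j mod nC = 0" by simp
    show ?thesis unfolding m using \<open>Suc j = nC\<close> ik qk2 unfolding succC_def cC_def by auto
  qed
qed

lemma C_fib: "\<forall>U \<subseteq> lab. U \<noteq> {} \<longrightarrow> (\<forall>u\<in>U. \<forall>u'\<in>U. keyC i0 k u = keyC i0 k u') \<longrightarrow> (\<exists>S. is_kernel U (AL (keyC i0 k) (cycC i0 k)) S)"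
proof (intro allI impI)
  fix U assume U: "U \<subseteq> lab" "U \<noteq> {}" and c: "\<forall>u\<in>U. \<forall>u'\<in>U. keyC i0 k u = keyC i0 k u'"
  show "\<exists>S. is_kernel U (AL (keyC i0 k) (cycC i0 k)) S"
  proof (cases "\<forall>u\<in>U. inC i0 k u")
    case True
    have "U \<subseteq> cC i0 k ` {..<nC}" using True cC_onto by blast
    moreover have "even nC" using qpos ik nth_mem by fastforce
    moreover have "2 \<le> nC" using ik by simp
    moreover have "(cC i0 k i, cC i0 k j) \<in> AL (keyC i0 k) (cycC i0 k) \<longleftrightarrow> j = Suc i mod nC"
      if ij: "i < nC" "j < nC" for i j
    proof -
      have ci: "inC i0 k (cC i0 k i)" "inC i0 k (cC i0 k j)" using cC_inC ij by auto
      then have kk: "keyC i0 k (cC i0 k i) = keyC i0 k (cC i0 k j)" unfolding keyC_def by simp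
      have si: "Suc i mod nC < nC" using ik by simp
      have "(cC i0 k i, cC i0 k j) \<in> AL (keyC i0 k) (cycC i0 k) \<longleftrightarrow> Rr (keyC i0 k) (cycC i0 k) (cC i0 k i) (cC i0 k j)"
        unfolding AL_def by simp
      also have "\<dots> \<longleftrightarrow> cC i0 k j = cC i0 k (Suc i mod nC)"
      proof
        assume "Rr (keyC i0 k) (cycC i0 k) (cC i0 k i) (cC i0 k j)"
        then have "cycC i0 k (cC i0 k i) (cC i0 k j)" using kk unfolding Rr_def by simp
        then show "cC i0 k j = cC i0 k (Suc i mod nC)" using succ_cC ij unfolding cycC_def by simp
      next
        assume e: "cC i0 k j = cC i0 k (Suc i mod nC)"
        have "i \<noteq> Suc i mod nC"
        proof (cases "Suc i < nC")
          case True then show ?thesis by simp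
        next
          case False then have "Suc i = nC" using ij by simp
          then show ?thesis using ik by simp
        qed
        then have "cC i0 k i \<noteq> cC i0 k j" using e cC_inj ij si by (metis inj_on_eq_iff lessThan_iff)
        moreover have "ed (cC i0 k i) \<inter> ed (cC i0 k j) \<noteq> {}"
          using succ_adj[OF ci(1)] e succ_cC ij by simp
        moreover have "cycC i0 k (cC i0 k i) (cC i0 k j)" using ci e succ_cC ij unfolding cycC_def by simp
        moreover have "cC i0 k i \<in> lab" "cC i0 k j \<in> lab" using ci unfolding inC_def by auto
        ultimately show "Rr (keyC i0 k) (cycC i0 k) (cC i0 k i) (cC i0 k j)" using kk unfolding Rr_def by simp
      qed
      also have "\<dots> \<longleftrightarrow> j = Suc i mod nC" using cC_inj ij si by (metis inj_on_eq_iff lessThan_iff)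
      finally show ?thesis .
    qed
    ultimately show ?thesis using cycle_kernel[of nC "cC i0 k" "AL (keyC i0 k) (cycC i0 k)" U] cC_inj by blast
  next
    case False
    then obtain u where u: "u \<in> U" "\<not> inC i0 k u" by blast
    have "U = {u}"
    proof
      show "U \<subseteq> {u}"
      proof
        fix u' assume "u' \<in> U"
        then have "keyC i0 k u' = keyC i0 k u" using c u by blast
        then show "u' \<in> {u}" using u unfolding keyC_def by (auto split: if_splits)
      qed
    qed (use u in simp)
    moreover have "is_kernel {u} (AL (keyC i0 k) (cycC i0 k)) {u}"
      unfolding is_kernel_def AL_def Rr_def by simp
    ultimately show ?thesis by blast
  qed
qed

lemma NO1: "Rr (keyC i0 k) (cycC i0 k) l h \<Longrightarrow> inC i0 k l \<Longrightarrow> inC i0 k h \<Longrightarrow> h = succC i0 k l"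
  unfolding Rr_def keyC_def cycC_def by simp

lemma NO2: "\<not> inC i0 k l \<Longrightarrow> inC i0 k h \<Longrightarrow> \<not> Rr (keyC i0 k) (cycC i0 k) l h"
  unfolding Rr_def keyC_def by auto

lemma NO3: "Out (keyC i0 k) (cycC i0 k) (0,0) = {}"
proof -
  have "\<not> Rr (keyC i0 k) (cycC i0 k) (0,0) h" for h
  proof
    assume R: "Rr (keyC i0 k) (cycC i0 k) (0,0) h"
    have "\<not> inC i0 k (0,0)" unfolding inC_def by simp
    moreover have "h \<noteq> (0,0)" using R Rr_D by blast
    ultimately show False using R unfolding Rr_def keyC_def cycC_def by (auto split: if_splits)
  qed
  then show ?thesis unfolding Out_def by blast
qed

end
end

context th begin

lemma inC_I: "i < r \<Longrightarrow> j < qs!i \<Longrightarrow> i = i0 \<or> i = k \<Longrightarrow> inC i0 k (Suc i, j)"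
  unfolding inC_def by simp

lemma caseC:
  assumes ik: "i0 < r" "k < r" "i0 \<noteq> k" "4 \<le> qs!i0"
    and j0: "2 \<le> j0" "j0 + 2 \<le> qs!i0"
    and p: "3 \<le> p" "r + 1 \<le> p"
  shows "f_edge_orientable (theta_E qs) (f_kv (theta_E qs) p (Suc i0, j0))"
proof (rule eo[OF C_H[OF ik] C_fib[OF ik]])
  let ?k = "keyC i0 k" and ?c = "cycC i0 k"
  let ?v = "(Suc i0, j0)"
  let ?a = "(Suc i0, j0 - 1)" and ?b = "(Suc i0, j0)"
  have incv: "inc ?v = {?a, ?b}" using inc_int[of i0 j0] ik j0 by simp
  have cv: "card (inc ?v) = 2" unfolding incv using j0 by simp
  show "\<forall>l\<in>lab. 1 + card (Out ?k ?c l) \<le> f_kv (theta_E qs) p ?v (ed l)"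
  proof
    fix l assume l: "l \<in> lab"
    show "1 + card (Out ?k ?c l) \<le> f_kv (theta_E qs) p ?v (ed l)"
    proof (cases "l = ?a")
      case True
      have "Out ?k ?c ?a \<subseteq> {(Suc i0, j0 - 1 - 1), (Suc i0, Suc (j0 - 1))}"
        by (rule out_int) (use ik j0 in simp_all)
      moreover have "\<not> Rr ?k ?c ?a (Suc i0, j0 - 1 - 1)"
      proof
        assume R: "Rr ?k ?c ?a (Suc i0, j0 - 1 - 1)"
        have "(Suc i0, j0 - 1 - 1) = succC i0 k ?a"
          by (rule NO1[OF ik R]) (use ik j0 in \<open>simp_all add: inC_I\<close>)
        then show False using j0 unfolding succC_def by simp
      qed
      ultimately have "Out ?k ?c ?a \<subseteq> {(Suc i0, Suc (j0 - 1))}" unfolding Out_def by blast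
      then have "card (Out ?k ?c ?a) \<le> 1" using card_mono[of "{(Suc i0, Suc (j0 - 1))}"] by fastforce
      moreover have "l \<in> inc ?v" using True incv by simp
      ultimately show ?thesis using fkv[OF l, of p ?v] cv True by simp
    next
      case nA: False
      show ?thesis
      proof (cases "l = ?b")
        case True
        have "Out ?k ?c ?b \<subseteq> {(Suc i0, j0 - 1), (Suc i0, Suc j0)}"
          by (rule out_int) (use ik j0 in simp_all)
        moreover have "\<not> Rr ?k ?c ?b ?a"
        proof
          assume R: "Rr ?k ?c ?b ?a"
          have "?a = succC i0 k ?b"
            by (rule NO1[OF ik R]) (use ik j0 in \<open>simp_all add: inC_I\<close>)
          then show False using j0 unfolding succC_def by (simp split: if_splits)
        qed
        ultimately have "Out ?k ?c ?b \<subseteq> {(Suc i0, Suc j0)}" unfolding Out_def by blast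
        then have "card (Out ?k ?c ?b) \<le> 1" using card_mono[of "{(Suc i0, Suc j0)}"] by fastforce
        moreover have "l \<in> inc ?v" using True incv by simp
        ultimately show ?thesis using fkv[OF l, of p ?v] cv True by simp
      next
        case nB: False
        then have nv: "l \<notin> inc ?v" using nA incv by simp
        have "card (Out ?k ?c l) \<le> p - 1"
        proof (cases rule: lab_class[OF l])
          case 1 then show ?thesis using NO3[OF ik] by simp
        next
          case (2 i sd)
          have "card (Out ?k ?c (Suc i, sE sd i)) \<le> r"
          proof (rule out_end2[OF 2(1)])
            let ?l = "(Suc i, sE sd i)"
            have lC: "inC i0 k ?l \<longleftrightarrow> i = i0 \<or> i = k" using 2 sE_lt[OF 2(1)] unfolding inC_def by auto
            show "(\<exists>h\<in>inc (xs sd). h \<noteq> ?l \<and> \<not> Rr ?k ?c ?l h) \<or> \<not> Rr ?k ?c ?l (Suc i, sN sd i)"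
            proof (cases "i = i0 \<or> i = k")
              case False
              let ?h = "(Suc i0, sE sd i0)"
              have "?h \<in> inc (xs sd)" using end_in_xs ik by simp
              moreover have "?h \<noteq> ?l" using False by simp
              moreover have "\<not> Rr ?k ?c ?l ?h"
                by (rule NO2[OF ik]) (use lC False ik sE_lt[of i0 sd] in \<open>simp_all add: inC_I\<close>)
              ultimately show ?thesis by blast
            next
              case True
              define i' where "i' = (if i = i0 then k else i0)"
              have i': "i' < r" "i' \<noteq> i" "i' = i0 \<or> i' = k" using True ik unfolding i'_def by auto
              let ?h = "(Suc i', sE sd i')"
              let ?pn = "(Suc i, sN sd i)"
              have hC: "inC i0 k ?h" using i' sE_lt[of i' sd] by (simp add: inC_I)
              have pC: "inC i0 k ?pn" using True 2(1) sN_lt[of i sd] by (simp add: inC_I)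
              have lC': "inC i0 k ?l" using lC True by simp
              have "\<not> Rr ?k ?c ?l ?h \<or> \<not> Rr ?k ?c ?l ?pn"
              proof (rule ccontr)
                assume "\<not> (\<not> Rr ?k ?c ?l ?h \<or> \<not> Rr ?k ?c ?l ?pn)"
                then have R1: "Rr ?k ?c ?l ?h" and R2: "Rr ?k ?c ?l ?pn" by blast+
                have "?h = succC i0 k ?l" by (rule NO1[OF ik R1 lC' hC])
                moreover have "?pn = succC i0 k ?l" by (rule NO1[OF ik R2 lC' pC])
                ultimately have "(Suc i', sE sd i') = (Suc i, sN sd i)" by (metis (no_types))
                then show False using i'(2) by simp
              qed
              moreover have "?h \<in> inc (xs sd)" using end_in_xs i' by simp
              moreover have "?h \<noteq> ?l" using i' by simp
              ultimately show ?thesis by blast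
            qed
          qed
          then show ?thesis using 2(2) p by simp
        next
          case (3 i j)
          have "card (Out ?k ?c l) \<le> 2" unfolding 3(4) by (rule out_int_card[OF 3(1-3)])
          then show ?thesis using p by simp
        qed
        then show ?thesis using fkv[OF l, of p ?v] nv p by simp
      qed
    qed
  qed
qed

end

theorem mainTheorem18:
  fixes qs :: "nat list" and p :: nat
  assumes "length qs \<ge> 1"
    and "\<forall>q \<in> set qs. q > 0 \<and> even q"
    and "Max (set qs) > 2"
    and "p \<ge> 3" and "p \<ge> max_degree (theta_V qs) (theta_E qs)"
  shows "strongly_edge_orientable (theta_V qs) (theta_E qs) p"
proof -
  interpret th qs using assms(1,2) by unfold_locales
  have ne: "set qs \<noteq> {}" using assms(1) by auto
  then have "Max (set qs) \<in> set qs" by simp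
  then obtain t where t0: "t < length qs" "qs!t = Max (set qs)" by (metis in_set_conv_nth)
  have "even (qs!t)" using assms(2) t0 nth_mem by blast
  then have t: "t < length qs" "4 \<le> qs!t" using t0 assms(3) by (auto elim!: evenE)
  have "(0,0) \<in> theta_V qs" unfolding theta_V_def by simp
  then have "degree (theta_E qs) (0,0) \<le> max_degree (theta_V qs) (theta_E qs)"
    unfolding max_degree_def using finite_V by simp
  then have pr: "length qs + 1 \<le> p" using assms(5) card_x1 degree_eq by simp
  have p3: "3 \<le> p" using assms(4) .
  show ?thesis
    unfolding strongly_edge_orientable_def
  proof
    fix v assume v: "v \<in> theta_V qs"
    then consider "v = (0,0) \<or> v = (0,1)" | i0 j0 where "v = (Suc i0, j0)" "i0 < length qs" "0 < j0" "j0 < qs!i0"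
      unfolding V_eq by blast
    then show "f_edge_orientable (theta_E qs) (f_kv (theta_E qs) p v)"
    proof cases
      case 1 then show ?thesis using case1[OF _ t p3 pr] by blast
    next
      case (2 i0 j0)
      have q0: "2 \<le> qs!i0" using q2 2 by simp
      have ev0: "even (qs!i0)" using assms(2) 2 nth_mem by blast
      show ?thesis
      proof (cases "j0 = 1")
        case True
        have inc: "inc (Suc i0, j0) = {(Suc i0, 0), (Suc i0, 1)}" using inc_int[of i0 j0] 2 True by simp
        show ?thesis unfolding 2(1)
          by (rule case2[OF 2(2-4) inc _ t _ p3 pr, where sd = True])
             (use t True 2 in \<open>auto simp: sE_def sN_def\<close>)
      next
        case n1: False
        show ?thesis
        proof (cases "j0 = qs!i0 - 1")
          case True
          have q4: "4 \<le> qs!i0" using n1 True q0 ev0 by (auto elim!: evenE)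
          have e: "j0 - 1 = qs!i0 - 2" using True by simp
          have "inc (Suc i0, j0) = {(Suc i0, j0 - 1), (Suc i0, j0)}" using inc_int[of i0 j0] 2 by simp
          also have "\<dots> = {(Suc i0, qs!i0 - 1), (Suc i0, qs!i0 - 2)}" unfolding e using True by blast
          finally have inc: "inc (Suc i0, j0) = {(Suc i0, qs!i0 - 1), (Suc i0, qs!i0 - 2)}" .
          show ?thesis unfolding 2(1)
            by (rule case2[OF 2(2-4) inc _ t _ p3 pr, where sd = False])
               (use t True 2 q4 in \<open>auto simp: sE_def sN_def\<close>)
        next
          case n2: False
          show ?thesis
          proof (cases "length qs = 1")
            case True
            have inc: "inc (Suc i0, j0) = {(Suc i0, j0 - 1), (Suc i0, j0)}" using inc_int[of i0 j0] 2 by simp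
            show ?thesis unfolding 2(1)
              by (rule case2[OF 2(2-4) inc _ t _ p3 pr, where sd = True]) (use True 2 in auto)
          next
            case False
            define k where "k = (if i0 = 0 then 1 else (0::nat))"
            have k: "k < length qs" "i0 \<noteq> k" using False assms(1) 2 unfolding k_def by auto
            have j: "2 \<le> j0" "j0 + 2 \<le> qs!i0" using n1 n2 2 by auto
            then have "4 \<le> qs!i0" by simp
            then show ?thesis unfolding 2(1) using caseC[OF 2(2) k _ j p3 pr] by blast
          qed
        qed
      qed
    qed
  qed
qed


end
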